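(* Let $M$ be a Riemann surface and let $F=\mathscr F(h,g):M\to\mathbb{CP}^3$ be a holomorphic Legendrian map, in an adapted homogeneous coordinate system, where $h,g$ are meromorphic functions on $M$ having only simple poles and $h\,dg$ is exact. Let $P=P(h)\cup P(g)$ be the union of the polar loci of $h$ and $g$. Then $F$ is an immersion if and only if $(h,g):M\setminus P\to\mathbb C^2$ is an immersion.
   Context: Let $\alpha_0=z_0dz_1-z_1dz_0+z_2dz_3-z_3dz_2$ on $\mathbb C^4$ and $\pi:\mathbb C^4\setminus\{0\}\to\mathbb{CP}^3$ the standard projection; the contact structure $\xi\subset T\mathbb{CP}^3$ is the holomorphic hyperplane bundle with $\{v: d\pi_z(v)\in\xi_{\pi(z)}\}=\ker\alpha_0(z)$. A holomorphic map into $\mathbb{CP}^3$ is Legendrian if it is tangent to $\xi$. An adapted homogeneous coordinate system is a system of homogeneous coordinates $[z_0:z_1:z_2:z_3]$ such that on the affine chart $\{z_0=1\}$ with coordinates $(z_1,z_2,z_3)$, $\xi=\ker(dz_1+z_2dz_3-z_3dz_2)$. In such coordinates, for meromorphic $h,g$ on $M$ with $h\,dg$ exact and a chosen meromorphic primitive $\int h\,dg$, $\mathscr F(h,g)=[1:\tfrac{hg}{2}-\int h\,dg: g:-\tfrac h2]$. *)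

theory Defs
  imports "HOL-Complex_Analysis.Complex_Analysis"
begin

type_synonym 'a chart = "'a set \<times> ('a \<Rightarrow> complex)"

definition riemann_surface :: "'a topology \<Rightarrow> 'a chart set \<Rightarrow> bool" where
  "riemann_surface X A \<longleftrightarrow>
     Hausdorff_space X \<and> connected_space X \<and> topspace X \<noteq> {} \<and>
     \<Union>(fst ` A) = topspace X \<and>
     (\<forall>(U,\<phi>)\<in>A. openin X U \<and> open (\<phi> ` U) \<and>
        homeomorphic_map (subtopology X U) (top_of_set (\<phi> ` U)) \<phi>) \<and>
     (\<forall>(U,\<phi>)\<in>A. \<forall>(V,\<psi>)\<in>A. (\<psi> \<circ> inv_into U \<phi>) holomorphic_on \<phi> ` (U \<inter> V))"

definition loc :: "'a chart \<Rightarrow> ('a \<Rightarrow> complex) \<Rightarrow> complex \<Rightarrow> complex" where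
  "loc c f = f \<circ> inv_into (fst c) (snd c)"

text \<open>Meromorphic function on the Riemann surface (values at non-poles are the
  holomorphic values).\<close>
definition rs_meromorphic :: "'a topology \<Rightarrow> 'a chart set \<Rightarrow> ('a \<Rightarrow> complex) \<Rightarrow> bool" where
  "rs_meromorphic X A f \<longleftrightarrow>
     (\<forall>c\<in>A. loc c f meromorphic_on (snd c ` fst c) \<and>
        (\<forall>w\<in>snd c ` fst c. \<not> is_pole (loc c f) w \<longrightarrow> loc c f analytic_on {w}))"

definition only_simple_poles :: "'a topology \<Rightarrow> 'a chart set \<Rightarrow> ('a \<Rightarrow> complex) \<Rightarrow> bool" where
  "only_simple_poles X A f \<longleftrightarrow>
     (\<forall>c\<in>A. \<forall>w\<in>snd c ` fst c. is_pole (loc c f) w \<longrightarrow> zorder (loc c f) w = -1)"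

definition pole_set :: "'a topology \<Rightarrow> 'a chart set \<Rightarrow> ('a \<Rightarrow> complex) \<Rightarrow> 'a set" where
  "pole_set X A f = {p \<in> topspace X. \<exists>c\<in>A. p \<in> fst c \<and> is_pole (loc c f) (snd c p)}"

text \<open>G is a meromorphic primitive of h dg, i.e. dG = h dg.\<close>
definition meromorphic_primitive ::
  "'a topology \<Rightarrow> 'a chart set \<Rightarrow> ('a \<Rightarrow> complex) \<Rightarrow> ('a \<Rightarrow> complex) \<Rightarrow> ('a \<Rightarrow> complex) \<Rightarrow> bool" where
  "meromorphic_primitive X A G h g \<longleftrightarrow> rs_meromorphic X A G \<and>
     (\<forall>c\<in>A. \<forall>w\<in>snd c ` fst c.
        \<not> is_pole (loc c h) w \<and> \<not> is_pole (loc c g) w \<and> \<not> is_pole (loc c G) w \<longrightarrow>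
        deriv (loc c G) w = loc c h w * deriv (loc c g) w)"

definition legF :: "('a \<Rightarrow> complex) \<Rightarrow> ('a \<Rightarrow> complex) \<Rightarrow> ('a \<Rightarrow> complex) \<Rightarrow> nat \<Rightarrow> 'a \<Rightarrow> complex" where
  "legF h g G i p = [1, h p * g p / 2 - G p, g p, - h p / 2] ! i"

text \<open>A map into CP^3 given by meromorphic homogeneous components fs 0..3 is an
  immersion at p iff near p it has a holomorphic nowhere-vanishing lift Z to
  C^4 - {0} (agreeing projectively with fs off the poles) such that Z(p) and
  Z'(p) are linearly independent (i.e. d(pi o Z) is injective at p).\<close>
definition proj_immersion_at :: "'a topology \<Rightarrow> 'a chart set \<Rightarrow> (nat \<Rightarrow> 'a \<Rightarrow> complex) \<Rightarrow> 'a \<Rightarrow> bool" where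
  "proj_immersion_at X A fs p \<longleftrightarrow>
     (\<exists>c\<in>A. p \<in> fst c \<and>
       (\<exists>W Z. open W \<and> snd c p \<in> W \<and> W \<subseteq> snd c ` fst c \<and>
          (\<forall>i<4. Z i holomorphic_on W) \<and>
          (\<forall>w\<in>W. \<exists>i<4. Z i w \<noteq> 0) \<and>
          (\<forall>w\<in>W. (\<forall>i<4. \<not> is_pole (loc c (fs i)) w) \<longrightarrow>
              (\<exists>t. t \<noteq> 0 \<and> (\<forall>i<4. Z i w = t * loc c (fs i) w))) \<and>
          (\<forall>a b. (\<forall>i<4. a * Z i (snd c p) + b * deriv (Z i) (snd c p) = 0) \<longrightarrow> a = 0 \<and> b = 0)))"

definition proj_immersion :: "'a topology \<Rightarrow> 'a chart set \<Rightarrow> (nat \<Rightarrow> 'a \<Rightarrow> complex) \<Rightarrow> bool" where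
  "proj_immersion X A fs \<longleftrightarrow> (\<forall>p\<in>topspace X. proj_immersion_at X A fs p)"

definition pair_immersion_on :: "'a topology \<Rightarrow> 'a chart set \<Rightarrow> ('a \<Rightarrow> complex) \<Rightarrow> ('a \<Rightarrow> complex) \<Rightarrow> 'a set \<Rightarrow> bool" where
  "pair_immersion_on X A h g S \<longleftrightarrow>
     (\<forall>p\<in>S. \<exists>c\<in>A. p \<in> fst c \<and>
        (deriv (loc c h) (snd c p) \<noteq> 0 \<or> deriv (loc c g) (snd c p) \<noteq> 0))"

end

theory Submission
  imports Defs
begin



lemma all4: "(\<forall>i<(4::nat). P i) \<longleftrightarrow> P 0 \<and> P 1 \<and> P 2 \<and> P 3"
  by (auto simp: less_Suc_eq numeral_eq_Suc)

lemma less4: "i < (4::nat) \<Longrightarrow> i = 0 \<or> i = 1 \<or> i = 2 \<or> i = 3"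
  by auto

lemma ex4: "(\<exists>i<(4::nat). P i) \<longleftrightarrow> P 0 \<or> P 1 \<or> P 2 \<or> P 3"
  by (auto simp: less_Suc_eq numeral_eq_Suc)

lemma simple_form:
  fixes f :: "complex \<Rightarrow> complex"
  assumes mer: "f meromorphic_on {z}" and np: "\<not> is_pole f z \<Longrightarrow> f analytic_on {z}"
    and sp: "is_pole f z \<Longrightarrow> zorder f z = -1"
  obtains a r where "r > 0" "a holomorphic_on ball z r" "f holomorphic_on ball z r - {z}"
    "\<forall>w\<in>ball z r - {z}. f w = a w / (w - z)" "is_pole f z \<Longrightarrow> a z \<noteq> 0"
proof (cases "is_pole f z")
  case True
  from meromorphic_on_isolated_singularity[OF mer] obtain r1 where r1: "r1 > 0" "f analytic_on ball z r1 - {z}"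
    unfolding isolated_singularity_at_def by blast
  have "f holomorphic_on ball z r1 - {z}" using r1 analytic_imp_holomorphic by blast
  from zorder_exist_pole[OF this _ _ True] r1 sp[OF True]
  obtain r where r: "r>0" "cball z r \<subseteq> ball z r1" "zor_poly f z holomorphic_on cball z r"
     "\<forall>w\<in>cball z r - {z}. f w = zor_poly f z w / (w - z) ^ nat (- (-1)) \<and> zor_poly f z w \<noteq> 0"
     "zor_poly f z z \<noteq> 0"
    by auto
  show ?thesis
  proof (rule that[of r "zor_poly f z"])
    show "zor_poly f z holomorphic_on ball z r" using r(3) holomorphic_on_subset ball_subset_cball by blast
    show "f holomorphic_on ball z r - {z}" using r(2) \<open>f holomorphic_on ball z r1 - {z}\<close>
      by (meson Diff_mono ball_subset_cball holomorphic_on_subset order.refl order_trans)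
    show "\<forall>w\<in>ball z r - {z}. f w = zor_poly f z w / (w - z)" using r(4) by auto
  qed (use r in auto)
next
  case False
  from np[OF False] obtain r where r: "r > 0" "f holomorphic_on ball z r"
    unfolding analytic_on_def by blast
  show ?thesis
  proof (rule that[of r "\<lambda>w. (w - z) * f w"])
    show "(\<lambda>w. (w - z) * f w) holomorphic_on ball z r" using r by (auto intro!: holomorphic_intros)
  qed (use r False in \<open>auto intro: holomorphic_on_subset\<close>)
qed




definition FF :: "(complex\<Rightarrow>complex) \<Rightarrow> (complex\<Rightarrow>complex) \<Rightarrow> (complex\<Rightarrow>complex) \<Rightarrow> nat \<Rightarrow> complex \<Rightarrow> complex" where
 "FF a b c i w = [1, a w * b w / 2 - c w, b w, - a w / 2] ! i"

lemma FF_simps: "FF a b c 0 = (\<lambda>_. 1)" "FF a b c 1 = (\<lambda>w. a w * b w / 2 - c w)"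
  "FF a b c 2 = b" "FF a b c 3 = (\<lambda>w. - a w / 2)"
  "FF a b c (Suc 0) = (\<lambda>w. a w * b w / 2 - c w)"
  by (auto simp: FF_def fun_eq_iff numeral_eq_Suc)

lemma loc_legF: "loc c (legF h g G i) = FF (loc c h) (loc c g) (loc c G) i"
  by (simp add: loc_def legF_def FF_def fun_eq_iff)

definition lift_ok :: "complex set \<Rightarrow> (nat \<Rightarrow> complex \<Rightarrow> complex) \<Rightarrow> complex \<Rightarrow> bool" where
 "lift_ok V F w0 \<longleftrightarrow> (\<exists>W Z. open W \<and> w0 \<in> W \<and> W \<subseteq> V \<and>
          (\<forall>i<4. Z i holomorphic_on W) \<and>
          (\<forall>w\<in>W. \<exists>i<4. Z i w \<noteq> 0) \<and>
          (\<forall>w\<in>W. (\<forall>i<4. \<not> is_pole (F i) w) \<longrightarrow>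
              (\<exists>t. t \<noteq> 0 \<and> (\<forall>i<4. Z i w = t * F i w))) \<and>
          (\<forall>a b. (\<forall>i<4. a * Z i w0 + b * deriv (Z i) w0 = 0) \<longrightarrow> a = 0 \<and> b = 0))"

locale loc_setting =
  fixes V :: "complex set" and lh lg lG :: "complex \<Rightarrow> complex"
  assumes V: "open V"
  and mh: "lh meromorphic_on V" and mg: "lg meromorphic_on V" and mG: "lG meromorphic_on V"
  and ah: "\<And>w. w \<in> V \<Longrightarrow> \<not> is_pole lh w \<Longrightarrow> lh analytic_on {w}"
  and ag: "\<And>w. w \<in> V \<Longrightarrow> \<not> is_pole lg w \<Longrightarrow> lg analytic_on {w}"
  and aG: "\<And>w. w \<in> V \<Longrightarrow> \<not> is_pole lG w \<Longrightarrow> lG analytic_on {w}"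
  and sh: "\<And>w. w \<in> V \<Longrightarrow> is_pole lh w \<Longrightarrow> zorder lh w = -1"
  and sg: "\<And>w. w \<in> V \<Longrightarrow> is_pole lg w \<Longrightarrow> zorder lg w = -1"
  and dG: "\<And>w. w \<in> V \<Longrightarrow> \<not> is_pole lh w \<Longrightarrow> \<not> is_pole lg w \<Longrightarrow> \<not> is_pole lG w \<Longrightarrow>
             deriv lG w = lh w * deriv lg w"
begin

lemma G_nopole:
  assumes w0: "w0 \<in> V" and nh: "\<not> is_pole lh w0" and ng: "\<not> is_pole lg w0"
  shows "\<not> is_pole lG w0"
proof
  assume pG: "is_pole lG w0"
  have mG0: "lG meromorphic_on {w0}" using mG w0 meromorphic_on_subset by blast
  from meromorphic_on_isolated_singularity[OF mG0] obtain r1 where r1: "r1 > 0" "lG analytic_on ball w0 r1 - {w0}"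
    unfolding isolated_singularity_at_def by blast
  from ah[OF w0 nh] obtain r2 where r2: "r2 > 0" "lh holomorphic_on ball w0 r2"
    unfolding analytic_on_def by blast
  from ag[OF w0 ng] obtain r3 where r3: "r3 > 0" "lg holomorphic_on ball w0 r3"
    unfolding analytic_on_def by blast
  from V w0 obtain r4 where r4: "r4 > 0" "ball w0 r4 \<subseteq> V" using open_contains_ball by blast
  define r where "r = min (min r1 r2) (min r3 r4)"
  have r: "r > 0" using r1 r2 r3 r4 by (simp add: r_def)
  have hh: "lh holomorphic_on ball w0 r" by (rule holomorphic_on_subset[OF r2(2)]) (auto simp: r_def intro!: subset_ball)
  have hg: "lg holomorphic_on ball w0 r" by (rule holomorphic_on_subset[OF r3(2)]) (auto simp: r_def intro!: subset_ball)
  have hG: "lG holomorphic_on ball w0 r - {w0}"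
    by (rule holomorphic_on_subset[OF analytic_imp_holomorphic[OF r1(2)]]) (auto simp: r_def)
  have ev: "eventually (\<lambda>w. deriv lG w = lh w * deriv lg w) (at w0)"
  proof -
    have "eventually (\<lambda>w. w \<in> ball w0 r - {w0}) (at w0)"
      using r by (intro eventually_at_in_open) auto
    then show ?thesis
    proof eventually_elim
      case (elim w)
      have o: "open (ball w0 r - {w0})" by auto
      have "w \<in> V" using elim r4 by (auto simp: r_def)
      moreover have "\<not> is_pole lh w" using not_is_pole_holomorphic[OF o elim] hh
        by (meson Diff_subset holomorphic_on_subset)
      moreover have "\<not> is_pole lg w" using not_is_pole_holomorphic[OF o elim] hg
        by (meson Diff_subset holomorphic_on_subset)
      moreover have "\<not> is_pole lG w" using not_is_pole_holomorphic[OF o elim hG] .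
      ultimately show ?case by (rule dG)
    qed
  qed
  have "is_pole (deriv lG) w0" using is_pole_deriv_iff[OF mG0] pG by simp
  then have "is_pole (\<lambda>w. lh w * deriv lg w) w0" using ev by (rule is_pole_transform) simp
  moreover have "(\<lambda>w. lh w * deriv lg w) holomorphic_on ball w0 r"
    using hh hg by (auto intro!: holomorphic_intros)
  ultimately show False using not_is_pole_holomorphic[of "ball w0 r" w0] r by auto
qed

end



context loc_setting begin

lemma nonpole_case:
  assumes w0: "w0 \<in> V" and nh: "\<not> is_pole lh w0" and ng: "\<not> is_pole lg w0"
  shows "lift_ok V (FF lh lg lG) w0 \<longleftrightarrow> deriv lh w0 \<noteq> 0 \<or> deriv lg w0 \<noteq> 0"
proof -
  have nG: "\<not> is_pole lG w0" using G_nopole[OF assms] .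
  have dG0: "deriv lG w0 = lh w0 * deriv lg w0" using dG[OF w0 nh ng nG] .
  from ah[OF w0 nh] obtain r2 where r2: "r2 > 0" "lh holomorphic_on ball w0 r2"
    unfolding analytic_on_def by blast
  from ag[OF w0 ng] obtain r3 where r3: "r3 > 0" "lg holomorphic_on ball w0 r3"
    unfolding analytic_on_def by blast
  from aG[OF w0 nG] obtain r1 where r1: "r1 > 0" "lG holomorphic_on ball w0 r1"
    unfolding analytic_on_def by blast
  from V w0 obtain r4 where r4: "r4 > 0" "ball w0 r4 \<subseteq> V" using open_contains_ball by blast
  define r where "r = min (min r1 r2) (min r3 r4)"
  have r: "r > 0" using r1 r2 r3 r4 by (simp add: r_def)
  have hh: "lh holomorphic_on ball w0 r"
    by (rule holomorphic_on_subset[OF r2(2)]) (auto simp: r_def intro!: subset_ball)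
  have hg: "lg holomorphic_on ball w0 r"
    by (rule holomorphic_on_subset[OF r3(2)]) (auto simp: r_def intro!: subset_ball)
  have hG: "lG holomorphic_on ball w0 r"
    by (rule holomorphic_on_subset[OF r1(2)]) (auto simp: r_def intro!: subset_ball)
  have rV: "ball w0 r \<subseteq> V" using r4 by (auto simp: r_def)
  have w0b: "w0 \<in> ball w0 r" using r by simp
  have hF: "FF lh lg lG i holomorphic_on ball w0 r" if "i < 4" for i
    using less4[OF that] hh hg hG
    by (elim disjE) (auto simp: FF_simps intro!: holomorphic_intros)
  have Dh: "(lh has_field_derivative deriv lh w0) (at w0)" using holomorphic_derivI[OF hh _ w0b] by simp
  have Dg: "(lg has_field_derivative deriv lg w0) (at w0)" using holomorphic_derivI[OF hg _ w0b] by simp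
  have DG: "(lG has_field_derivative deriv lG w0) (at w0)" using holomorphic_derivI[OF hG _ w0b] by simp
  show ?thesis
  proof
    assume "lift_ok V (FF lh lg lG) w0"
    then obtain W Z where W: "open W" "w0 \<in> W" "W \<subseteq> V"
      and Zh: "\<forall>i<4. Z i holomorphic_on W"
      and Zp: "\<forall>w\<in>W. (\<forall>i<4. \<not> is_pole (FF lh lg lG i) w) \<longrightarrow>
              (\<exists>t. t \<noteq> 0 \<and> (\<forall>i<4. Z i w = t * FF lh lg lG i w))"
      and Zi: "\<forall>a b. (\<forall>i<4. a * Z i w0 + b * deriv (Z i) w0 = 0) \<longrightarrow> a = 0 \<and> b = 0"
      unfolding lift_ok_def by blast
    show "deriv lh w0 \<noteq> 0 \<or> deriv lg w0 \<noteq> 0"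
    proof (rule ccontr)
      assume "\<not> ?thesis"
      then have d0: "deriv lh w0 = 0" "deriv lg w0 = 0" by auto
      define S where "S = W \<inter> ball w0 r"
      have S: "open S" "w0 \<in> S" using W r by (auto simp: S_def)
      have eqS: "Z i w = Z 0 w * FF lh lg lG i w" "Z 0 w \<noteq> 0" if "w \<in> S" "i < 4" for w i
      proof -
        have "\<not> is_pole (FF lh lg lG i) w" if "i < 4" for i
          using not_is_pole_holomorphic[OF _ _ hF[OF that]] \<open>w \<in> S\<close> by (auto simp: S_def)
        then obtain t where t: "t \<noteq> 0" "\<forall>i<4. Z i w = t * FF lh lg lG i w"
          using Zp \<open>w \<in> S\<close> by (auto simp: S_def)
        then have "Z 0 w = t" by (simp add: FF_simps)
        then show "Z i w = Z 0 w * FF lh lg lG i w" "Z 0 w \<noteq> 0" using t that by auto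
      qed
      have DZ0: "(Z 0 has_field_derivative deriv (Z 0) w0) (at w0)"
        using holomorphic_derivI[of "Z 0" W w0] Zh W by auto
      have DF: "(FF lh lg lG i has_field_derivative 0) (at w0)" if "i < 4" for i
      proof -
        have c: "i = 0 \<or> i = 1 \<or> i = 2 \<or> i = 3" using that by auto
        have "((\<lambda>w. lh w * lg w / 2 - lG w) has_field_derivative
               (deriv lh w0 * lg w0 + lh w0 * deriv lg w0) / 2 - deriv lG w0) (at w0)"
          by (auto intro!: derivative_eq_intros Dh Dg DG)
        moreover have "((\<lambda>w. - lh w / 2) has_field_derivative - deriv lh w0 / 2) (at w0)"
          by (auto intro!: derivative_eq_intros Dh)
        ultimately show ?thesis using c Dg d0 dG0 by (auto simp: FF_simps)
      qed
      have Di: "deriv (Z i) w0 = deriv (Z 0) w0 * FF lh lg lG i w0" if "i < 4" for i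
      proof -
        have "((\<lambda>w. Z 0 w * FF lh lg lG i w) has_field_derivative
               deriv (Z 0) w0 * FF lh lg lG i w0) (at w0)"
          using DERIV_mult[OF DZ0 DF[OF that]] by simp
        then have "(Z i has_field_derivative deriv (Z 0) w0 * FF lh lg lG i w0) (at w0)"
          by (rule has_field_derivative_transform_within_open[OF _ S]) (simp add: eqS(1)[OF _ that])
        then show ?thesis by (rule DERIV_imp_deriv)
      qed
      have "\<forall>i<4. deriv (Z 0) w0 * Z i w0 + (- Z 0 w0) * deriv (Z i) w0 = 0"
      proof (intro allI impI)
        fix i :: nat assume i: "i < 4"
        show "deriv (Z 0) w0 * Z i w0 + (- Z 0 w0) * deriv (Z i) w0 = 0"
          unfolding Di[OF i] eqS(1)[OF S(2) i] by (simp add: algebra_simps)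
      qed
      then have "- Z 0 w0 = 0" using Zi by blast
      then show False using eqS(2)[OF S(2), of 0] by simp
    qed
  next
    assume nz: "deriv lh w0 \<noteq> 0 \<or> deriv lg w0 \<noteq> 0"
    have i1: "\<forall>i<4. FF lh lg lG i holomorphic_on ball w0 r" using hF by blast
    have i2: "\<forall>w\<in>ball w0 r. \<exists>i<4. FF lh lg lG i w \<noteq> 0"
      by (intro ballI exI[of _ 0]) (simp add: FF_simps)
    have i3: "\<forall>w\<in>ball w0 r. (\<forall>i<4. \<not> is_pole (FF lh lg lG i) w) \<longrightarrow>
              (\<exists>t. t \<noteq> 0 \<and> (\<forall>i<4. FF lh lg lG i w = t * FF lh lg lG i w))"
      by (intro ballI impI) (rule exI[of _ 1], simp)
    have i4: "\<forall>a b. (\<forall>i<4. a * FF lh lg lG i w0 + b * deriv (FF lh lg lG i) w0 = 0) \<longrightarrow> a = 0 \<and> b = 0"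
    proof (intro allI impI)
      fix a b
      assume H: "\<forall>i<4. a * FF lh lg lG i w0 + b * deriv (FF lh lg lG i) w0 = 0"
      have "deriv (FF lh lg lG 0) w0 = 0" by (simp add: FF_simps)
      then have a0: "a = 0" using H[rule_format, of 0] by (simp add: FF_simps)
      have "deriv (FF lh lg lG 3) w0 = - deriv lh w0 / 2"
        by (rule DERIV_imp_deriv) (auto simp: FF_simps intro!: derivative_eq_intros Dh)
      then have "b * deriv lh w0 = 0" "b * deriv lg w0 = 0"
        using H[rule_format, of 3] H[rule_format, of 2] a0 by (auto simp: FF_simps)
      then show "a = 0 \<and> b = 0" using a0 nz by auto
    qed
    show "lift_ok V (FF lh lg lG) w0"
      unfolding lift_ok_def
    proof (rule exI[of _ "ball w0 r"], rule exI[of _ "FF lh lg lG"], intro conjI)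
      show "open (ball w0 r)" by simp
      show "w0 \<in> ball w0 r" using r by simp
      show "ball w0 r \<subseteq> V" by (rule rV)
    qed (rule i1 i2 i3 i4)+
  qed
qed

end



lemma cont_eq_at:
  fixes F G :: "complex \<Rightarrow> complex"
  assumes "isCont F z" "isCont G z" "eventually (\<lambda>w. F w = G w) (at z)"
  shows "F z = G z"
proof -
  have "(F \<longlongrightarrow> F z) (at z)" using assms(1) by (rule isContD)
  then have "(G \<longlongrightarrow> F z) (at z)" by (rule Lim_transform_eventually[OF _ assms(3)])
  moreover have "(G \<longlongrightarrow> G z) (at z)" using assms(2) by (rule isContD)
  ultimately show ?thesis using tendsto_unique[OF trivial_limit_at] by blast
qed

lemma alg:
  fixes d A B A' B' :: complex
  assumes "d \<noteq> 0"
  shows "((A' * d - A) / d^2 * (B / d) + A / d * ((B' * d - B) / d^2)) / 2 - A / d * ((B' * d - B) / d^2)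
         = (A' * B - A * B') / (2 * d^2)"
  using assms by (simp add: field_simps power2_eq_square)

lemma alg2:
  fixes d P Q :: complex
  assumes "d \<noteq> 0" "P * inverse (d^(m+2)) = Q / (2 * d^2)"
  shows "P = Q * d^m / 2"
proof -
  have X: "d^(m+2) \<noteq> 0" using assms(1) by simp
  have "P = P * inverse (d^(m+2)) * d^(m+2)" by (metis X mult.assoc mult.right_neutral left_inverse)
  also have "\<dots> = Q / (2 * d^2) * d^(m+2)" by (simp only: assms(2))
  also have "\<dots> = Q * d^m / 2" using assms(1) by (simp add: power_add field_simps power2_eq_square)
  finally show ?thesis .
qed

lemma alg3: "(d::complex) \<noteq> 0 \<Longrightarrow> - A / 2 = d * (- (A / d) / 2)"
  by (simp add: field_simps)

lemma is_pole_half: "is_pole (\<lambda>w. - f w / 2) z \<longleftrightarrow> is_pole (f :: complex \<Rightarrow> complex) z"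
proof -
  have "(\<lambda>w. - f w / 2) = (\<lambda>w. (-1/2) * f w)" by (auto simp: fun_eq_iff)
  then show ?thesis using is_pole_cmult_iff[of "-1/2" f z] by simp
qed

lemma holo_isCont: "f holomorphic_on ball z r \<Longrightarrow> r > 0 \<Longrightarrow> isCont f z"
  using holomorphic_on_imp_continuous_on continuous_on_eq_continuous_at
  by (metis centre_in_ball open_ball)

context loc_setting begin

lemma pole_case:
  assumes w0: "w0 \<in> V" and p: "is_pole lh w0 \<or> is_pole lg w0"
  shows "lift_ok V (FF lh lg lG) w0"
proof -
  have mh0: "lh meromorphic_on {w0}" using mh w0 meromorphic_on_subset by blast
  have mg0: "lg meromorphic_on {w0}" using mg w0 meromorphic_on_subset by blast
  have mG0: "lG meromorphic_on {w0}" using mG w0 meromorphic_on_subset by blast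
  obtain a ra where ra: "ra > 0" "a holomorphic_on ball w0 ra" "lh holomorphic_on ball w0 ra - {w0}"
    "\<forall>w\<in>ball w0 ra - {w0}. lh w = a w / (w - w0)" "is_pole lh w0 \<Longrightarrow> a w0 \<noteq> 0"
    using simple_form[OF mh0 ah[OF w0] sh[OF w0]] by metis
  obtain b rb where rb: "rb > 0" "b holomorphic_on ball w0 rb" "lg holomorphic_on ball w0 rb - {w0}"
    "\<forall>w\<in>ball w0 rb - {w0}. lg w = b w / (w - w0)" "is_pole lg w0 \<Longrightarrow> b w0 \<noteq> 0"
    using simple_form[OF mg0 ag[OF w0] sg[OF w0]] by metis
  from meromorphic_on_isolated_singularity[OF mG0] obtain rG where rG: "rG > 0" "lG analytic_on ball w0 rG - {w0}"
    unfolding isolated_singularity_at_def by blast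
  from V w0 obtain r4 where r4: "r4 > 0" "ball w0 r4 \<subseteq> V" using open_contains_ball by blast
  define r where "r = min (min ra rb) (min rG r4)"
  have r: "r > 0" using ra rb rG r4 by (simp add: r_def)
  have rV: "ball w0 r \<subseteq> V" using r4 by (auto simp: r_def)
  have ha: "a holomorphic_on ball w0 r"
    by (rule holomorphic_on_subset[OF ra(2)]) (auto simp: r_def intro!: subset_ball)
  have hb: "b holomorphic_on ball w0 r"
    by (rule holomorphic_on_subset[OF rb(2)]) (auto simp: r_def intro!: subset_ball)
  have hh: "lh holomorphic_on ball w0 r - {w0}"
    by (rule holomorphic_on_subset[OF ra(3)]) (auto simp: r_def)
  have hg: "lg holomorphic_on ball w0 r - {w0}"
    by (rule holomorphic_on_subset[OF rb(3)]) (auto simp: r_def)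
  have hG: "lG holomorphic_on ball w0 r - {w0}"
    by (rule holomorphic_on_subset[OF analytic_imp_holomorphic[OF rG(2)]]) (auto simp: r_def)
  have eh: "lh w = a w / (w - w0)" if "w \<in> ball w0 r - {w0}" for w
    using ra(4) that by (auto simp: r_def)
  have eg: "lg w = b w / (w - w0)" if "w \<in> ball w0 r - {w0}" for w
    using rb(4) that by (auto simp: r_def)
  define f where "f = (\<lambda>w. lh w * lg w / 2 - lG w)"
  define q where "q = (\<lambda>w. deriv a w * b w - a w * deriv b w)"
  have hq: "q holomorphic_on ball w0 r" unfolding q_def using ha hb
    by (auto intro!: holomorphic_intros)
  have mf: "f meromorphic_on {w0}" unfolding f_def using mh0 mg0 mG0
    by (auto intro!: meromorphic_intros)
  have df: "deriv f w = q w / (2 * (w - w0)^2)" if w: "w \<in> ball w0 r - {w0}" for w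
  proof -
    define S where "S = ball w0 r - {w0}"
    have S: "open S" "w \<in> S" using w by (auto simp: S_def)
    have wne: "w - w0 \<noteq> 0" using w by auto
    have wb: "w \<in> ball w0 r" using w by auto
    have Da: "(a has_field_derivative deriv a w) (at w)" using holomorphic_derivI[OF ha _ wb] by simp
    have Db: "(b has_field_derivative deriv b w) (at w)" using holomorphic_derivI[OF hb _ wb] by simp
    define Dh where "Dh = (deriv a w * (w - w0) - a w) / (w - w0)^2"
    define Dg where "Dg = (deriv b w * (w - w0) - b w) / (w - w0)^2"
    have "((\<lambda>x. a x / (x - w0)) has_field_derivative Dh) (at w)"
      unfolding Dh_def using wne
      by (auto intro!: derivative_eq_intros Da simp: field_simps power2_eq_square)
    then have DDh: "(lh has_field_derivative Dh) (at w)"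
      by (rule has_field_derivative_transform_within_open[OF _ S]) (simp add: eh S_def)
    have "((\<lambda>x. b x / (x - w0)) has_field_derivative Dg) (at w)"
      unfolding Dg_def using wne
      by (auto intro!: derivative_eq_intros Db simp: field_simps power2_eq_square)
    then have DDg: "(lg has_field_derivative Dg) (at w)"
      by (rule has_field_derivative_transform_within_open[OF _ S]) (simp add: eg S_def)
    have DDG: "(lG has_field_derivative deriv lG w) (at w)"
      using holomorphic_derivI[OF hG S(1)[unfolded S_def] S(2)[unfolded S_def]] by simp
    have np: "\<not> is_pole lh w" "\<not> is_pole lg w" "\<not> is_pole lG w"
      using not_is_pole_holomorphic[OF S(1)[unfolded S_def] S(2)[unfolded S_def]] hh hg hG by auto
    have "w \<in> V" using rV wb by auto
    have dGw: "deriv lG w = lh w * Dg"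
      using dG[OF \<open>w \<in> V\<close> np] DERIV_imp_deriv[OF DDg] by simp
    have "(f has_field_derivative (Dh * lg w + lh w * Dg) / 2 - deriv lG w) (at w)"
      unfolding f_def by (auto intro!: derivative_eq_intros DDh DDg DDG)
    then have "deriv f w = (Dh * lg w + lh w * Dg) / 2 - lh w * Dg"
      using DERIV_imp_deriv dGw by simp
    also have "\<dots> = q w / (2 * (w - w0)^2)"
      unfolding Dh_def Dg_def q_def eh[OF w] eg[OF w] using alg[OF wne] by simp
    finally show ?thesis .
  qed
  have claim: "\<exists>c s. s > 0 \<and> s \<le> r \<and> c holomorphic_on ball w0 s \<and>
                 (\<forall>w\<in>ball w0 s - {w0}. c w = (w - w0) * f w)"
  proof (cases "\<exists>\<^sub>F w in at w0. f w \<noteq> 0")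
    case False
    then have "eventually (\<lambda>w. f w = 0) (at w0)" by (simp add: frequently_def)
    then obtain d where d: "d > 0" "\<forall>x. x \<noteq> w0 \<and> dist x w0 < d \<longrightarrow> f x = 0"
      by (auto simp: eventually_at)
    show ?thesis
      apply (rule exI[of _ "\<lambda>_. 0"], rule exI[of _ "min d r"])
      using d r by (auto simp: dist_commute)
  next
    case True
    have iso: "isolated_singularity_at f w0" using meromorphic_on_isolated_singularity[OF mf] .
    have ness: "not_essential f w0" using meromorphic_on_not_essential[OF mf] .
    define n where "n = zorder f w0"
    define v where "v = zor_poly f w0"
    obtain s0 where s0: "s0 > 0" "v holomorphic_on cball w0 s0"
      "\<forall>w\<in>cball w0 s0 - {w0}. f w = v w * (w - w0) powi n \<and> v w \<noteq> 0"
      using zorder_exist[OF iso ness True] unfolding n_def v_def by blast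
    show ?thesis
    proof (cases "n \<ge> -1")
      case True
      show ?thesis
      proof (rule exI[of _ "\<lambda>w. v w * (w - w0) ^ nat (n+1)"], rule exI[of _ "min s0 r"], intro conjI ballI)
        show "min s0 r > 0" using s0 r by simp
        show "min s0 r \<le> r" by simp
        have "v holomorphic_on ball w0 (min s0 r)"
          by (rule holomorphic_on_subset[OF s0(2)]) auto
        then show "(\<lambda>w. v w * (w - w0) ^ nat (n+1)) holomorphic_on ball w0 (min s0 r)"
          by (auto intro!: holomorphic_intros)
        fix w assume w: "w \<in> ball w0 (min s0 r) - {w0}"
        then have "f w = v w * (w - w0) powi n" using s0(3) by auto
        moreover have "(w - w0) * (w - w0) powi n = (w - w0) ^ nat (n+1)"
          using True w by (cases "n = -1") (auto simp: power_int_def nat_add_distrib)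
        ultimately show "v w * (w - w0) ^ nat (n+1) = (w - w0) * f w"
          by (metis mult.left_commute)
      qed
    next
      case False
      then have nle: "n \<le> -2" by simp
      have pf: "is_pole f w0" using neg_zorder_imp_is_pole[OF iso ness _ True] nle n_def by simp
      have pdf: "is_pole (deriv f) w0" using is_pole_deriv_iff[OF mf] pf by simp
      have zdf: "zorder (deriv f) w0 = n - 1"
        using zorder_deriv_minus_1[OF iso ness True] nle n_def by simp
      have fr: "\<exists>\<^sub>F w in at w0. deriv f w \<noteq> 0"
        by (rule eventually_frequently) (simp_all add: non_zero_neighbour_pole[OF pdf])
      define P where "P = zor_poly (deriv f) w0"
      obtain s1 where s1: "s1 > 0" "P holomorphic_on cball w0 s1"
        "\<forall>w\<in>cball w0 s1 - {w0}. deriv f w = P w * (w - w0) powi (n - 1) \<and> P w \<noteq> 0"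
        "P w0 \<noteq> 0"
        using zorder_exist[OF isolated_singularity_at_deriv[OF iso] not_essential_deriv[OF ness iso] fr]
        unfolding zdf P_def by blast
      define m where "m = nat (-(n+1))"
      have m: "m \<ge> 1" using nle by (simp add: m_def)
      define s where "s = min s1 r"
      have s: "s > 0" using s1 r by (simp add: s_def)
      have eqP: "P w = q w * (w - w0)^m / 2" if w: "w \<in> ball w0 s - {w0}" for w
      proof -
        have wne: "w - w0 \<noteq> 0" using w by auto
        have "P w * (w - w0) powi (n - 1) = q w / (2 * (w - w0)^2)"
          using s1(3) df[of w] w by (auto simp: s_def)
        moreover have "(w - w0) powi (n - 1) = inverse ((w - w0)^(m + 2))"
        proof -
          have e: "nat (1 - n) = m + 2" using nle by (simp add: m_def nat_eq_iff)
          have "(w - w0) powi (n - 1) = inverse (w - w0) ^ nat (- (n - 1))"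
            using nle by (simp add: power_int_def)
          also have "nat (- (n - 1)) = m + 2" using e by simp
          finally show ?thesis by (simp add: power_inverse)
        qed
        ultimately show ?thesis using alg2[OF wne] by simp
      qed
      have "P w0 = q w0 * (w0 - w0)^m / 2"
      proof (rule cont_eq_at[where F=P and G="\<lambda>w. q w * (w - w0)^m / 2"])
        have "P holomorphic_on ball w0 s1" by (rule holomorphic_on_subset[OF s1(2)]) auto
        then show "isCont P w0" using holo_isCont s1(1) by blast
        have "isCont q w0" using holo_isCont[OF hq r] .
        then show "isCont (\<lambda>w. q w * (w - w0)^m / 2) w0" by (auto intro!: continuous_intros)
        have "eventually (\<lambda>w. w \<in> ball w0 s - {w0}) (at w0)"
          using s by (intro eventually_at_in_open) auto
        then show "eventually (\<lambda>w. P w = q w * (w - w0)^m / 2) (at w0)"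
          by eventually_elim (rule eqP)
      qed
      then have "P w0 = 0" using m by (simp add: power_0_left)
      then show ?thesis using s1(4) by simp
    qed
  qed
  from claim obtain c s where cs: "s > 0" "s \<le> r" "c holomorphic_on ball w0 s"
     "\<forall>w\<in>ball w0 s - {w0}. c w = (w - w0) * f w" by blast
  define Z where "Z = (\<lambda>i::nat. [\<lambda>w. w - w0, c, b, \<lambda>w. - a w / 2] ! i)"
  have Zs: "Z 0 = (\<lambda>w. w - w0)" "Z 1 = c" "Z (Suc 0) = c" "Z 2 = b" "Z 3 = (\<lambda>w. - a w / 2)"
    by (simp_all add: Z_def numeral_eq_Suc)
  have sub: "ball w0 s \<subseteq> ball w0 r" using cs by (auto intro!: subset_ball)
  have ha': "a holomorphic_on ball w0 s" using ha sub by (rule holomorphic_on_subset)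
  have hb': "b holomorphic_on ball w0 s" using hb sub by (rule holomorphic_on_subset)
  have i1: "\<forall>i<4. Z i holomorphic_on ball w0 s"
  proof (intro allI impI)
    fix i :: nat assume i4: "i < 4"
    show "Z i holomorphic_on ball w0 s"
      using less4[OF i4] ha' hb' cs(3) by (elim disjE) (auto simp: Zs intro!: holomorphic_intros)
  qed
  have i2: "\<forall>w\<in>ball w0 s. \<exists>i<4. Z i w \<noteq> 0"
  proof
    fix w assume w: "w \<in> ball w0 s"
    show "\<exists>i<4. Z i w \<noteq> 0"
    proof (cases "w = w0")
      case True
      show ?thesis
      proof (cases "is_pole lh w0")
        case True
        then show ?thesis using ra(5) \<open>w = w0\<close> by (intro exI[of _ 3]) (simp add: Zs)
      next
        case False
        then have "is_pole lg w0" using p by blast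
        then show ?thesis using rb(5) \<open>w = w0\<close> by (intro exI[of _ 2]) (simp add: Zs)
      qed
    next
      case False
      then show ?thesis by (intro exI[of _ 0]) (simp add: Zs)
    qed
  qed
  have i3: "\<forall>w\<in>ball w0 s. (\<forall>i<4. \<not> is_pole (FF lh lg lG i) w) \<longrightarrow>
              (\<exists>t. t \<noteq> 0 \<and> (\<forall>i<4. Z i w = t * FF lh lg lG i w))"
  proof (intro ballI impI)
    fix w assume w: "w \<in> ball w0 s" and np: "\<forall>i<4. \<not> is_pole (FF lh lg lG i) w"
    have "\<not> is_pole lg w" using np[rule_format, of 2] by (simp add: FF_simps)
    moreover have "\<not> is_pole lh w"
    proof -
      have "\<not> is_pole (FF lh lg lG 3) w" by (rule np[rule_format]) simp
      then have "\<not> is_pole (\<lambda>w. - lh w / 2) w" unfolding FF_simps .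
      then show ?thesis using is_pole_half by blast
    qed
    ultimately have wne: "w \<noteq> w0" using p by auto
    have wr: "w \<in> ball w0 r - {w0}" using w wne sub by auto
    have ws: "w \<in> ball w0 s - {w0}" using w wne by auto
    have dne: "w - w0 \<noteq> 0" using wne by simp
    show "\<exists>t. t \<noteq> 0 \<and> (\<forall>i<4. Z i w = t * FF lh lg lG i w)"
    proof (intro exI[of _ "w - w0"] conjI allI impI)
      show "w - w0 \<noteq> 0" by (rule dne)
      fix i :: nat assume i4: "i < 4"
      have c1: "c w = (w - w0) * f w" using cs(4) ws by blast
      show "Z i w = (w - w0) * FF lh lg lG i w"
        using less4[OF i4]
      proof (elim disjE)
        assume "i = 0" then show ?thesis by (simp add: Zs FF_simps)
      next
        assume "i = 1" then show ?thesis by (simp add: Zs FF_simps c1 f_def)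
      next
        assume "i = 2" then show ?thesis using dne by (simp add: Zs FF_simps eg[OF wr])
      next
        assume "i = 3" then show ?thesis using alg3[OF dne, of "a w"] by (simp only: Zs FF_simps eh[OF wr])
      qed
    qed
  qed
  have i4: "\<forall>x y. (\<forall>i<4. x * Z i w0 + y * deriv (Z i) w0 = 0) \<longrightarrow> x = 0 \<and> y = 0"
  proof (intro allI impI)
    fix x y
    assume H: "\<forall>i<4. x * Z i w0 + y * deriv (Z i) w0 = 0"
    have "deriv (\<lambda>w. w - w0) w0 = 1"
      by (rule DERIV_imp_deriv) (auto intro!: derivative_eq_intros)
    then have y0: "y = 0" using H[rule_format, of 0] by (simp add: Zs)
    have "x * b w0 = 0" "x * (- a w0 / 2) = 0"
      using H[rule_format, of 2] H[rule_format, of 3] y0 by (simp_all add: Zs)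
    then have "x = 0" using p ra(5) rb(5) by auto
    then show "x = 0 \<and> y = 0" using y0 by simp
  qed
  show "lift_ok V (FF lh lg lG) w0"
    unfolding lift_ok_def
  proof (rule exI[of _ "ball w0 s"], rule exI[of _ Z], intro conjI)
    show "open (ball w0 s)" by simp
    show "w0 \<in> ball w0 s" using cs by simp
    show "ball w0 s \<subseteq> V" using sub rV by blast
  qed (rule i1 i2 i3 i4)+
qed

end



lemma LS:
  assumes rs: "riemann_surface X A"
    and mh: "rs_meromorphic X A h" and sh: "only_simple_poles X A h"
    and mg: "rs_meromorphic X A g" and sg: "only_simple_poles X A g"
    and mp: "meromorphic_primitive X A G h g"
    and c: "c \<in> A"
  shows "loc_setting (snd c ` fst c) (loc c h) (loc c g) (loc c G)"
proof -
  obtain U \<phi> where cU: "c = (U, \<phi>)" by (cases c)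
  have "open (\<phi> ` U)" using rs c cU unfolding riemann_surface_def by fastforce
  moreover have mG: "rs_meromorphic X A G" using mp unfolding meromorphic_primitive_def by blast
  ultimately show ?thesis
    unfolding loc_setting_def using mh sh mg sg mp mG c cU
    unfolding rs_meromorphic_def only_simple_poles_def meromorphic_primitive_def
    by auto
qed

lemma PI: "proj_immersion_at X A (legF h g G) p \<longleftrightarrow>
   (\<exists>c\<in>A. p \<in> fst c \<and> lift_ok (snd c ` fst c) (FF (loc c h) (loc c g) (loc c G)) (snd c p))"
  unfolding proj_immersion_at_def lift_ok_def loc_legF by simp

theorem corollary2p3:
  fixes X :: "'a topology" and A :: "'a chart set"
    and h g G :: "'a \<Rightarrow> complex"
  assumes "riemann_surface X A"
    and "rs_meromorphic X A h" and "only_simple_poles X A h"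
    and "rs_meromorphic X A g" and "only_simple_poles X A g"
    and "meromorphic_primitive X A G h g"
  shows "proj_immersion X A (legF h g G) \<longleftrightarrow>
         pair_immersion_on X A h g (topspace X - (pole_set X A h \<union> pole_set X A g))"
proof
  assume L: "proj_immersion X A (legF h g G)"
  show "pair_immersion_on X A h g (topspace X - (pole_set X A h \<union> pole_set X A g))"
    unfolding pair_immersion_on_def
  proof
    fix p assume p: "p \<in> topspace X - (pole_set X A h \<union> pole_set X A g)"
    have "proj_immersion_at X A (legF h g G) p" using L p unfolding proj_immersion_def by blast
    then obtain c where c: "c \<in> A" "p \<in> fst c"
      "lift_ok (snd c ` fst c) (FF (loc c h) (loc c g) (loc c G)) (snd c p)"
      unfolding PI by blast
    have V: "snd c p \<in> snd c ` fst c" using c(2) by (rule imageI)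
    have pn: "p \<notin> pole_set X A h" "p \<notin> pole_set X A g" "p \<in> topspace X" using p by auto
    have nh: "\<not> is_pole (loc c h) (snd c p)" using pn c by (auto simp: pole_set_def)
    have ng: "\<not> is_pole (loc c g) (snd c p)" using pn c by (auto simp: pole_set_def)
    have "deriv (loc c h) (snd c p) \<noteq> 0 \<or> deriv (loc c g) (snd c p) \<noteq> 0"
      using loc_setting.nonpole_case[OF LS[OF assms c(1)] V nh ng] c(3) by simp
    then show "\<exists>c\<in>A. p \<in> fst c \<and> (deriv (loc c h) (snd c p) \<noteq> 0 \<or> deriv (loc c g) (snd c p) \<noteq> 0)"
      using c by blast
  qed
next
  assume R: "pair_immersion_on X A h g (topspace X - (pole_set X A h \<union> pole_set X A g))"
  show "proj_immersion X A (legF h g G)"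
    unfolding proj_immersion_def
  proof
    fix p assume p: "p \<in> topspace X"
    show "proj_immersion_at X A (legF h g G) p"
      unfolding PI
    proof (cases "p \<in> pole_set X A h \<union> pole_set X A g")
      case True
      then obtain c where c: "c \<in> A" "p \<in> fst c"
        "is_pole (loc c h) (snd c p) \<or> is_pole (loc c g) (snd c p)"
        unfolding pole_set_def by blast
      have V: "snd c p \<in> snd c ` fst c" using c(2) by (rule imageI)
      have "lift_ok (snd c ` fst c) (FF (loc c h) (loc c g) (loc c G)) (snd c p)"
        by (rule loc_setting.pole_case[OF LS[OF assms c(1)] V c(3)])
      then show "\<exists>c\<in>A. p \<in> fst c \<and> lift_ok (snd c ` fst c) (FF (loc c h) (loc c g) (loc c G)) (snd c p)"
        using c by blast
    next
      case False
      have pP: "p \<in> topspace X - (pole_set X A h \<union> pole_set X A g)" using False p by blast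
      obtain c where c: "c \<in> A" "p \<in> fst c"
        "deriv (loc c h) (snd c p) \<noteq> 0 \<or> deriv (loc c g) (snd c p) \<noteq> 0"
        using R[unfolded pair_immersion_on_def, rule_format, OF pP] by blast
      have V: "snd c p \<in> snd c ` fst c" using c(2) by (rule imageI)
      have pn: "p \<notin> pole_set X A h" "p \<notin> pole_set X A g" using False by auto
      have nh: "\<not> is_pole (loc c h) (snd c p)" using pn p c by (auto simp: pole_set_def)
      have ng: "\<not> is_pole (loc c g) (snd c p)" using pn p c by (auto simp: pole_set_def)
      have "lift_ok (snd c ` fst c) (FF (loc c h) (loc c g) (loc c G)) (snd c p)"
        using loc_setting.nonpole_case[OF LS[OF assms c(1)] V nh ng] c(3) by simp
      then show "\<exists>c\<in>A. p \<in> fst c \<and> lift_ok (snd c ` fst c) (FF (loc c h) (loc c g) (loc c G)) (snd c p)"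
        using c by blast
    qed
  qed
qed



end
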